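(* For each $K\in\mathbb{N}$, there exists a $\Delta\in\mathbb{N}$ such that the following holds. If $G$ is a finite graph with $\delta(x,y)\le K$ for all $x,y\in V(G)$, then either $G$ or its complement $\overline{G}$ has maximum degree at most $\Delta$.
   Context: All graphs are finite and simple. For a vertex $x$ of a graph $G$, $\Gamma(x)$ denotes its neighbourhood. The neighbourhood-distance between two vertices $x,y$ is $\delta(x,y)=|(\Gamma(x)\setminus \{y\})\,\triangle\, (\Gamma(y)\setminus\{x\})|$ (with $\delta(x,x)=0$), where $\triangle$ is symmetric difference. $\overline{G}$ is the complement of $G$. *)

theory Defs
  imports Main
begin

definition simple_graph :: "'a set \<Rightarrow> ('a \<Rightarrow> 'a \<Rightarrow> bool) \<Rightarrow> bool" where
  "simple_graph V E \<longleftrightarrow> finite V \<and> (\<forall>x y. E x y \<longrightarrow> x \<in> V \<and> y \<in> V)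
     \<and> (\<forall>x y. E x y \<longrightarrow> E y x) \<and> (\<forall>x. \<not> E x x)"

definition nbhd :: "'a set \<Rightarrow> ('a \<Rightarrow> 'a \<Rightarrow> bool) \<Rightarrow> 'a \<Rightarrow> 'a set" where
  "nbhd V E x = {y \<in> V. E x y}"

definition compl_edges :: "'a set \<Rightarrow> ('a \<Rightarrow> 'a \<Rightarrow> bool) \<Rightarrow> 'a \<Rightarrow> 'a \<Rightarrow> bool" where
  "compl_edges V E x y \<longleftrightarrow> x \<in> V \<and> y \<in> V \<and> x \<noteq> y \<and> \<not> E x y"

definition nbhd_dist :: "'a set \<Rightarrow> ('a \<Rightarrow> 'a \<Rightarrow> bool) \<Rightarrow> 'a \<Rightarrow> 'a \<Rightarrow> nat" where
  "nbhd_dist V E x y = (if x = y then 0 else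
     card (((nbhd V E x - {y}) - (nbhd V E y - {x})) \<union> ((nbhd V E y - {x}) - (nbhd V E x - {y}))))"

definition max_degree_le :: "'a set \<Rightarrow> ('a \<Rightarrow> 'a \<Rightarrow> bool) \<Rightarrow> nat \<Rightarrow> bool" where
  "max_degree_le V E D \<longleftrightarrow> (\<forall>x\<in>V. card (nbhd V E x) \<le> D)"

end

theory Submission
  imports Defs
begin

lemma local_bound:
  fixes V :: "'a set"
  assumes G: "simple_graph V E"
    and dist: "\<forall>x\<in>V. \<forall>y\<in>V. nbhd_dist V E x y \<le> K"
    and x: "x \<in> V"
  shows "card (nbhd V E x) \<le> K*K+K \<or> card {y\<in>V. y \<noteq> x \<and> \<not> E x y} \<le> K"
proof (rule ccontr)
  assume H: "\<not> ?thesis"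
  define N where "N = nbhd V E x"
  define M where "M = {y\<in>V. y \<noteq> x \<and> \<not> E x y}"
  have fin: "finite V" using G by (simp add: simple_graph_def)
  have sym: "\<And>a b. E a b \<Longrightarrow> E b a" and irr: "\<And>a. \<not> E a a"
    and inV: "\<And>a b. E a b \<Longrightarrow> a \<in> V \<and> b \<in> V"
    using G by (auto simp: simple_graph_def)
  have finN: "finite N" "finite M" using fin by (auto simp: N_def M_def nbhd_def)
  have bigN: "card N > K*K+K" and bigM: "card M > K" using H by (auto simp: N_def M_def)
  have yM: "card (nbhd V E y \<inter> M) \<le> K" if y: "y \<in> N" for y
  proof -
    have yV: "y \<in> V" and yx: "y \<noteq> x" using y irr by (auto simp: N_def nbhd_def)
    have sub: "nbhd V E y \<inter> M \<subseteq> ((nbhd V E y - {x}) - (nbhd V E x - {y})) \<union> ((nbhd V E x - {y}) - (nbhd V E y - {x}))"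
      by (auto simp: M_def nbhd_def)
    have "card (nbhd V E y \<inter> M) \<le> card (((nbhd V E y - {x}) - (nbhd V E x - {y})) \<union> ((nbhd V E x - {y}) - (nbhd V E y - {x})))"
      by (rule card_mono[OF _ sub]) (simp add: nbhd_def fin)
    also have "\<dots> = nbhd_dist V E y x" using yx by (simp add: nbhd_dist_def)
    also have "\<dots> \<le> K" using dist yV x by auto
    finally show ?thesis .
  qed
  have zN: "card (N - nbhd V E z) \<le> K" if z: "z \<in> M" for z
  proof -
    have zV: "z \<in> V" and zx: "z \<noteq> x" using z by (auto simp: M_def)
    have sub: "N - nbhd V E z \<subseteq> ((nbhd V E x - {z}) - (nbhd V E z - {x})) \<union> ((nbhd V E z - {x}) - (nbhd V E x - {z}))"
      using z irr by (auto simp: M_def N_def nbhd_def)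
    have "card (N - nbhd V E z) \<le> card (((nbhd V E x - {z}) - (nbhd V E z - {x})) \<union> ((nbhd V E z - {x}) - (nbhd V E x - {z})))"
      by (rule card_mono[OF _ sub]) (simp add: nbhd_def fin)
    also have "\<dots> = nbhd_dist V E x z" using zx by (simp add: nbhd_dist_def)
    also have "\<dots> \<le> K" using dist zV x by auto
    finally show ?thesis .
  qed
  obtain Z where ZM: "Z \<subseteq> M" and cZ: "card Z = K+1"
    using obtain_subset_with_card_n[of "K+1" M] bigM by auto
  have finZ: "finite Z" using ZM finN(2) finite_subset by blast
  define U where "U = (\<Union>z\<in>Z. N - nbhd V E z)"
  have "card U \<le> (\<Sum>z\<in>Z. card (N - nbhd V E z))" unfolding U_def by (rule card_UN_le[OF finZ])
  also have "\<dots> \<le> (\<Sum>z\<in>Z. K)" using zN ZM by (intro sum_mono) auto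
  also have "\<dots> = (K+1)*K" using cZ by simp
  finally have cU: "card U \<le> K*K+K" by (simp add: algebra_simps)
  have "\<not> N \<subseteq> U"
  proof
    assume "N \<subseteq> U"
    moreover have "finite U" unfolding U_def using finZ finN by auto
    ultimately have "card N \<le> card U" by (rule card_mono[rotated])
    with cU bigN show False by simp
  qed
  then obtain y where yN: "y \<in> N" and yU: "y \<notin> U" by blast
  have "Z \<subseteq> nbhd V E y \<inter> M"
  proof
    fix z assume zZ: "z \<in> Z"
    then have "y \<in> nbhd V E z" using yU yN unfolding U_def by blast
    then have "E y z" using sym by (auto simp: nbhd_def)
    moreover have "z \<in> V" using zZ ZM by (auto simp: M_def)
    ultimately show "z \<in> nbhd V E y \<inter> M" using zZ ZM by (auto simp: nbhd_def)
  qed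
  then have "card Z \<le> card (nbhd V E y \<inter> M)"
    by (rule card_mono[rotated]) (use finN in auto)
  with yM[OF yN] cZ show False by simp
qed

theorem proposition2p1:
  fixes K :: nat
  shows "\<exists>D::nat. \<forall>(V::nat set) E. simple_graph V E \<longrightarrow>
           (\<forall>x\<in>V. \<forall>y\<in>V. nbhd_dist V E x y \<le> K) \<longrightarrow>
           max_degree_le V E D \<or> max_degree_le V (compl_edges V E) D"
proof (intro exI[of _ "K*K+2*K+2"] allI impI)
  fix V :: "nat set" and E
  assume G: "simple_graph V E" and dist: "\<forall>x\<in>V. \<forall>y\<in>V. nbhd_dist V E x y \<le> K"
  have fin: "finite V" using G by (simp add: simple_graph_def)
  show "max_degree_le V E (K*K+2*K+2) \<or> max_degree_le V (compl_edges V E) (K*K+2*K+2)"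
  proof (rule ccontr)
    assume "\<not> ?thesis"
    then obtain x w where x: "x \<in> V" and w: "w \<in> V"
      and cx: "card (nbhd V E x) > K*K+2*K+2"
      and cw: "card (nbhd V (compl_edges V E) w) > K*K+2*K+2"
      unfolding max_degree_le_def by (auto simp: not_le)
    have eqc: "nbhd V (compl_edges V E) u = {y\<in>V. y \<noteq> u \<and> \<not> E u y}" if "u \<in> V" for u
      using that by (auto simp: nbhd_def compl_edges_def)
    have Mx: "card {y\<in>V. y \<noteq> x \<and> \<not> E x y} \<le> K"
      using local_bound[OF G dist x] cx by auto
    have Nw: "card (nbhd V E w) \<le> K*K+K"
      using local_bound[OF G dist w] cw eqc[OF w] by auto
    show False
    proof (cases "x = w")
      case True
      then show ?thesis using Mx cw eqc[OF w] by auto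
    next
      case False
      have finw: "finite (insert w (nbhd V E w - {x}))" using fin by (auto simp: nbhd_def)
      have "card (nbhd V E x) - card (insert w (nbhd V E w - {x})) \<le> card (nbhd V E x - insert w (nbhd V E w - {x}))"
        by (rule diff_card_le_card_Diff[OF finw])
      moreover have "card (insert w (nbhd V E w - {x})) \<le> card (nbhd V E w) + 1"
      proof -
        have f: "finite (nbhd V E w - {x})" using finw by simp
        have "card (insert w (nbhd V E w - {x})) \<le> card (nbhd V E w - {x}) + 1"
          using f by (simp add: card_insert_if)
        moreover have "card (nbhd V E w - {x}) \<le> card (nbhd V E w)"
          by (rule card_Diff1_le)
        ultimately show ?thesis by simp
      qed
      moreover have c3: "card (nbhd V E x - insert w (nbhd V E w - {x})) \<le> nbhd_dist V E x w"
      proof -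
      have "nbhd V E x - insert w (nbhd V E w - {x}) \<subseteq> ((nbhd V E x - {w}) - (nbhd V E w - {x})) \<union> ((nbhd V E w - {x}) - (nbhd V E x - {w}))"
        by auto
      then have "card (nbhd V E x - insert w (nbhd V E w - {x})) \<le> card (((nbhd V E x - {w}) - (nbhd V E w - {x})) \<union> ((nbhd V E w - {x}) - (nbhd V E x - {w})))"
        by (rule card_mono[rotated]) (simp add: nbhd_def fin)
      also have "\<dots> = nbhd_dist V E x w" using False by (simp add: nbhd_dist_def)
      finally show ?thesis .
      qed
      moreover have "nbhd_dist V E x w \<le> K" using dist x w by auto
      ultimately show False using cx Nw by linarith
    qed
  qed
qed

end
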